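(* Let $A$ and $B$ be finite-dimensional Hilbert spaces. For any $\mathcal{T}\in\mathrm{TPCP}(B,A)$, any $\sigma\in\mathrm{P}(A)$ and any $\mathcal{N}\in\mathrm{TPCP}(A,B)$, the function $\Delta_{\mathcal{T},\sigma,\mathcal{N}}:\mathrm{S}_\sigma(A)\to\mathbb{R}\cup\{-\infty\}$, \[ \Delta_{\mathcal{T},\sigma,\mathcal{N}}(\rho):=D(\rho\|\sigma)-D\bigl(\mathcal{N}(\rho)\|\mathcal{N}(\sigma)\bigr)-D_{\mathbb{M}}\bigl(\rho\,\|\,(\mathcal{T}\circ\mathcal{N})(\rho)\bigr), \] is upper semicontinuous.
   Context: $\mathrm{S}(A)$: density operators on $A$; $\mathrm{P}(A)$: non-negative operators on $A$; $\mathrm{TPCP}(A,B)$: quantum channels from $A$ to $B$. $\mathrm{S}_\sigma(A):=\{\rho\in\mathrm{S}(A):\mathrm{supp}(\rho)\subseteq\mathrm{supp}(\sigma)\}$. $D(\rho\|\sigma):=\mathrm{tr}(\rho(\log\rho-\log\sigma))$ if $\mathrm{supp}(\rho)\subseteq\mathrm{supp}(\sigma)$, $+\infty$ otherwise. $D_{\mathbb{M}}(\rho\|\tau):=\sup D(\mathcal{M}(\rho)\|\mathcal{M}(\tau))$ over all finite POVMs $\{M_x\}$ with $\mathcal{M}(\omega)=\sum_x\mathrm{tr}(\omega M_x)|x\rangle\langle x|$. *)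

theory Defs
  imports "HOL-Analysis.Analysis"
begin

text \<open>Operators on a finite-dimensional Hilbert space A are complex matrices
  indexed by a finite type 'a, i.e. elements of complex^'a^'a (with the
  Euclidean topology of this finite-dimensional space).\<close>

definition cadj :: "complex^'n^'m \<Rightarrow> complex^'m^'n" where
  "cadj M = (\<chi> i j. cnj (M $ j $ i))"

definition cinner :: "complex^'n \<Rightarrow> complex^'n \<Rightarrow> complex" where
  "cinner v w = (\<Sum>i\<in>UNIV. cnj (v $ i) * w $ i)"

definition psd :: "complex^'n^'n \<Rightarrow> bool" where
  "psd M \<longleftrightarrow> (\<forall>v. cinner v (M *v v) \<in> \<real> \<and> 0 \<le> Re (cinner v (M *v v)))"

definition density :: "complex^'n^'n \<Rightarrow> bool" where
  "density \<rho> \<longleftrightarrow> psd \<rho> \<and> trace \<rho> = 1"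

definition supp :: "complex^'n^'n \<Rightarrow> (complex^'n) set" where
  "supp M = range (\<lambda>v. M *v v)"

definition S_sub :: "complex^'n^'n \<Rightarrow> (complex^'n^'n) set" where
  "S_sub \<sigma> = {\<rho>. density \<rho> \<and> supp \<rho> \<subseteq> supp \<sigma>}"

definition unitary_mat :: "complex^'n^'n \<Rightarrow> bool" where
  "unitary_mat U \<longleftrightarrow> cadj U ** U = mat 1 \<and> U ** cadj U = mat 1"

definition diag_mat :: "('n \<Rightarrow> real) \<Rightarrow> complex^'n^'n" where
  "diag_mat l = (\<chi> i j. if i = j then complex_of_real (l i) else 0)"

definition mat_fun :: "(real \<Rightarrow> real) \<Rightarrow> complex^'n^'n \<Rightarrow> complex^'n^'n" where
  "mat_fun f M = (SOME B. \<exists>U l. unitary_mat U \<and> M = U ** diag_mat l ** cadj U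
                          \<and> B = U ** diag_mat (f \<circ> l) ** cadj U)"

text \<open>Logarithm on the support (eigenvalue 0 is sent to 0; this implements the
  usual convention 0 log 0 = 0 and restriction to the support).\<close>
definition mat_log :: "complex^'n^'n \<Rightarrow> complex^'n^'n" where
  "mat_log M = mat_fun (\<lambda>x. if x > 0 then ln x else 0) M"

definition rel_ent :: "complex^'n^'n \<Rightarrow> complex^'n^'n \<Rightarrow> ereal" where
  "rel_ent \<rho> \<sigma> = (if supp \<rho> \<subseteq> supp \<sigma>
      then ereal (Re (trace (\<rho> ** (mat_log \<rho> - mat_log \<sigma>)))) else \<infinity>)"

definition tpcp :: "(complex^'a^'a \<Rightarrow> complex^'b^'b) \<Rightarrow> bool" where
  "tpcp N \<longleftrightarrow> (\<exists>(m::nat) (K :: nat \<Rightarrow> complex^'a^'b).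
      N = (\<lambda>X. \<Sum>k<m. K k ** X ** cadj (K k)) \<and>
      (\<Sum>k<m. cadj (K k) ** K k) = mat 1)"

definition povm :: "nat \<Rightarrow> (nat \<Rightarrow> complex^'n^'n) \<Rightarrow> bool" where
  "povm n M \<longleftrightarrow> (\<forall>x<n. psd (M x)) \<and> (\<Sum>x<n. M x) = mat 1"

definition classical_rel_ent :: "nat \<Rightarrow> (nat \<Rightarrow> real) \<Rightarrow> (nat \<Rightarrow> real) \<Rightarrow> ereal" where
  "classical_rel_ent n p q = (if (\<forall>x<n. q x = 0 \<longrightarrow> p x = 0)
      then ereal (\<Sum>x\<in>{x. x < n \<and> p x \<noteq> 0}. p x * (ln (p x) - ln (q x))) else \<infinity>)"

definition meas_rel_ent :: "complex^'n^'n \<Rightarrow> complex^'n^'n \<Rightarrow> ereal" where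
  "meas_rel_ent \<rho> \<tau> = (SUP (n, M) \<in> {(n, M). povm n M}.
      classical_rel_ent n (\<lambda>x. Re (trace (\<rho> ** M x))) (\<lambda>x. Re (trace (\<tau> ** M x))))"

definition usc_on :: "'a::topological_space set \<Rightarrow> ('a \<Rightarrow> ereal) \<Rightarrow> bool" where
  "usc_on S f \<longleftrightarrow> (\<forall>x\<in>S. \<forall>c. f x < c \<longrightarrow> (\<forall>\<^sub>F y in at x within S. f y < c))"

end

theory Submission
  imports Defs "HOL-Real_Asymp.Real_Asymp"
begin

lemma cinner_add_left: "cinner (u + v) w = cinner u w + cinner v w"
  by (simp add: cinner_def sum.distrib distrib_right)
lemma cinner_add_right: "cinner w (u + v) = cinner w u + cinner w v"
  by (simp add: cinner_def sum.distrib distrib_left)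
lemma cinner_diff_left: "cinner (u - v) w = cinner u w - cinner v w"
  by (simp add: cinner_def sum_subtractf left_diff_distrib)
lemma cinner_diff_right: "cinner w (u - v) = cinner w u - cinner w v"
  by (simp add: cinner_def sum_subtractf right_diff_distrib)
lemma cinner_scale_left: "cinner (c *s u) w = cnj c * cinner u w"
  by (simp add: cinner_def sum_distrib_left mult.assoc)
lemma cinner_scale_right: "cinner w (c *s u) = c * cinner w u"
  by (simp add: cinner_def sum_distrib_left mult.left_commute)
lemma cinner_scaleR_left: "cinner (c *\<^sub>R u) w = of_real c * cinner u w"
  unfolding cinner_def scaleR_vec_def by (simp add: sum_distrib_left mult.assoc scaleR_conv_of_real)
lemma cinner_scaleR_right: "cinner w (c *\<^sub>R u) = of_real c * cinner w u"
  unfolding cinner_def scaleR_vec_def by (simp add: sum_distrib_left mult.left_commute scaleR_conv_of_real)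
lemma cinner_commute: "cinner u w = cnj (cinner w u)"
  by (simp add: cinner_def mult.commute)
lemma cinner_zero_left[simp]: "cinner 0 w = 0" by (simp add: cinner_def)
lemma cinner_zero_right[simp]: "cinner w 0 = 0" by (simp add: cinner_def)
lemma cinner_sum_left: "finite A \<Longrightarrow> cinner (\<Sum>a\<in>A. f a) w = (\<Sum>a\<in>A. cinner (f a) w)"
  by (induct A rule: finite_induct) (auto simp: cinner_add_left)
lemma cinner_sum_right: "finite A \<Longrightarrow> cinner w (\<Sum>a\<in>A. f a) = (\<Sum>a\<in>A. cinner w (f a))"
  by (induct A rule: finite_induct) (auto simp: cinner_add_right)

lemma cinner_self: "cinner v v = complex_of_real ((norm v)^2)"
proof -
  have "cinner v v = (\<Sum>i\<in>UNIV. complex_of_real ((norm (v$i))^2))"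
    unfolding cinner_def by (intro sum.cong refl) (metis complex_norm_square mult.commute)
  also have "\<dots> = complex_of_real (\<Sum>i\<in>UNIV. (norm (v$i))^2)" by simp
  also have "(\<Sum>i\<in>UNIV. (norm (v$i))^2) = (norm v)^2"
    unfolding norm_vec_def L2_set_def by (simp add: sum_nonneg)
  finally show ?thesis .
qed

lemma cinner_adj: "cinner v (M *v w) = cinner (cadj M *v v) w"
  unfolding cinner_def cadj_def matrix_vector_mult_def
  by (simp add: sum_distrib_left sum_distrib_right mult_ac) (rule sum.swap)

lemma cadj_cadj[simp]: "cadj (cadj A) = A"
  by (simp add: cadj_def vec_eq_iff)
lemma cadj_mult: "cadj (A ** B) = cadj B ** cadj A"
  by (simp add: cadj_def matrix_matrix_mult_def vec_eq_iff mult.commute)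
lemma cadj_add: "cadj (A + B) = cadj A + cadj B"
  by (simp add: cadj_def vec_eq_iff)
lemma cadj_mat1[simp]: "cadj (mat 1) = mat 1"
  by (simp add: cadj_def mat_def vec_eq_iff)

lemma mv_scale: "(M::complex^'n^'m) *v (c *s v) = c *s (M *v v)"
  unfolding matrix_vector_mult_def vector_scalar_mult_def vec_eq_iff
  by (simp add: sum_distrib_left mult.left_commute[of c])
lemma mv_scaleR: "(M::complex^'n^'m) *v (c *\<^sub>R v) = c *\<^sub>R (M *v v)"
  unfolding matrix_vector_mult_def vec_eq_iff
  by (simp add: scaleR_sum_right mult_scaleR_right)

lemma cinner_axis_left: "cinner (axis i 1) x = x $ i"
proof -
  have "\<And>r. cnj (axis i 1 $ r) * x $ r = (if r = i then x $ i else 0)" by (simp add: axis_def)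
  then show ?thesis unfolding cinner_def by simp
qed

lemma cinner_axis: "cinner (axis i 1) (M *v axis j 1) = M $ i $ j"
proof -
  have "\<And>r. M $ i $ r * axis j 1 $ r = (if r = j then M $ i $ j else 0)" by (simp add: axis_def)
  then show ?thesis by (simp add: cinner_axis_left matrix_vector_mult_def)
qed

lemma herm_from_inner:
  assumes "\<And>u w. cinner u (M *v w) = cinner (M *v u) w"
  shows "cadj M = M"
proof -
  have "M $ i $ j = cnj (M $ j $ i)" for i j
  proof -
    have "M $ i $ j = cinner (axis i 1) (M *v axis j 1)" by (simp add: cinner_axis)
    also have "\<dots> = cinner (M *v axis i 1) (axis j 1)" by (rule assms)
    also have "\<dots> = cnj (cinner (axis j 1) (M *v axis i 1))" by (rule cinner_commute)
    finally show ?thesis by (simp add: cinner_axis)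
  qed
  then have "cadj M $ i $ j = M $ i $ j" for i j unfolding cadj_def
    by (metis complex_cnj_cnj vec_lambda_beta)
  then show ?thesis by (simp add: vec_eq_iff)
qed

lemma psd_inner:
  assumes "psd M"
  shows "cinner u (M *v w) = cinner (M *v u) w"
proof -
  define Q where "Q v = cinner v (M *v v)" for v
  have real: "Im (Q v) = 0" for v using assms unfolding psd_def Q_def
    by (meson complex_is_Real_iff)
  define a where "a = cinner u (M *v w)"
  define b where "b = cinner w (M *v u)"
  have expand: "Q (u + c *s w) = Q u + c * a + cnj c * b + c * cnj c * Q w" for c
    unfolding Q_def a_def b_def
    by (simp add: matrix_vector_right_distrib mv_scale cinner_add_left cinner_add_right
        cinner_scale_left cinner_scale_right algebra_simps)
  have 1: "Im a + Im b = 0" using real[of "u + 1 *s w"] real[of u] real[of w]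
    by (simp only: expand) simp
  have 2: "Re a - Re b = 0" using real[of "u + \<i> *s w"] real[of u] real[of w]
    by (simp only: expand) simp
  have "a = cnj b" using 1 2 by (simp add: complex_eq_iff)
  then show ?thesis unfolding a_def b_def by (metis cinner_commute)
qed

lemma psd_herm: "psd M \<Longrightarrow> cadj M = M"
  by (rule herm_from_inner) (rule psd_inner)

lemma continuous_on_cinner[continuous_intros]:
  "continuous_on S a \<Longrightarrow> continuous_on S b \<Longrightarrow> continuous_on S (\<lambda>x. cinner (a x) (b x))"
  unfolding cinner_def by (intro continuous_intros)

lemma continuous_on_mv[continuous_intros]:
  fixes M :: "complex^'n^'m"
  shows "continuous_on S b \<Longrightarrow> continuous_on S (\<lambda>x. M *v b x)"
  unfolding matrix_vector_mult_def by (intro continuous_intros)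

definition hermi :: "complex^'n^'n \<Rightarrow> bool" where
  "hermi H \<longleftrightarrow> (\<forall>u w. cinner u (H *v w) = cinner (H *v u) w)"

lemma psd_hermi: "psd M \<Longrightarrow> hermi M"
  using psd_inner hermi_def by blast

lemma eigen_in_subspace:
  fixes H :: "complex^'n^'n"
  assumes hH: "hermi H"
    and fin: "finite F"
    and eig: "\<forall>f\<in>F. \<exists>\<mu>::real. H *v f = \<mu> *\<^sub>R f"
    and w0: "w \<noteq> 0" and wW: "\<forall>f\<in>F. cinner f w = 0"
  shows "\<exists>v. (\<forall>f\<in>F. cinner f v = 0) \<and> norm v = 1 \<and> (\<exists>\<mu>::real. H *v v = \<mu> *\<^sub>R v)"
proof -
  define W where "W = {v. \<forall>f\<in>F. cinner f v = 0}"
  have hh: "cinner u (H *v w) = cinner (H *v u) w" for u w using hH hermi_def by blast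
  have Wadd: "a \<in> W \<Longrightarrow> b \<in> W \<Longrightarrow> a + b \<in> W" for a b
    by (simp add: W_def cinner_add_right)
  have Wdiff: "a \<in> W \<Longrightarrow> b \<in> W \<Longrightarrow> a - b \<in> W" for a b
    by (simp add: W_def cinner_diff_right)
  have Wscale: "a \<in> W \<Longrightarrow> c *\<^sub>R a \<in> W" for a c
    by (simp add: W_def cinner_scaleR_right)
  have Winv: "a \<in> W \<Longrightarrow> H *v a \<in> W" for a
  proof -
    assume a: "a \<in> W"
    { fix f assume f: "f \<in> F"
      then obtain \<mu> :: real where "H *v f = \<mu> *\<^sub>R f" using eig by blast
      then have "cinner f (H *v a) = of_real \<mu> * cinner f a" by (simp add: hh cinner_scaleR_left)
      also have "\<dots> = 0" using a f by (simp add: W_def)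
      finally have "cinner f (H *v a) = 0" . }
    then show ?thesis by (simp add: W_def)
  qed
  have closedW: "closed W"
  proof -
    have "W = (\<Inter>f\<in>F. {v. cinner f v = 0})" by (auto simp: W_def)
    moreover have "closed {v. cinner f v = 0}" for f
      by (rule closed_Collect_eq) (intro continuous_intros)+
    ultimately show ?thesis by auto
  qed
  define K where "K = W \<inter> sphere 0 1"
  have compK: "compact K" unfolding K_def using closedW by (intro closed_Int_compact) auto
  have wW': "w \<in> W" using wW by (simp add: W_def)
  have "(1 / norm w) *\<^sub>R w \<in> K" unfolding K_def using w0 Wscale[OF wW'] by auto
  then have Kne: "K \<noteq> {}" by auto
  define R where "R y = Re (cinner y (H *v y))" for y
  have contR: "continuous_on K R" unfolding R_def by (intro continuous_intros)
  obtain v where vK: "v \<in> K" and vmax: "\<And>y. y \<in> K \<Longrightarrow> R y \<le> R v"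
    using continuous_attains_sup[OF compK Kne contR] by blast
  define \<mu> where "\<mu> = R v"
  have vW: "v \<in> W" and nv: "norm v = 1" using vK by (auto simp: K_def)
  have cvv: "cinner v v = 1" using nv by (simp add: cinner_self)
  have "cinner v (H *v v) = cnj (cinner v (H *v v))"
    by (metis hh cinner_commute)
  then have cvHv: "cinner v (H *v v) = of_real \<mu>"
    unfolding \<mu>_def R_def by (metis Reals_cnj_iff complex_is_Real_iff of_real_Re)
  have bound: "R y \<le> \<mu> * (norm y)^2" if yW: "y \<in> W" and y0: "y \<noteq> 0" for y
  proof -
    define s where "s = norm y"
    have s0: "s > 0" using y0 by (simp add: s_def)
    have "(1/s) *\<^sub>R y \<in> K" unfolding K_def using Wscale[OF yW] s0 by (auto simp: s_def)
    then have "R ((1/s) *\<^sub>R y) \<le> \<mu>" using vmax \<mu>_def by blast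
    moreover have "R ((1/s) *\<^sub>R y) = R y / s^2"
      unfolding R_def by (simp add: mv_scaleR cinner_scaleR_left cinner_scaleR_right power2_eq_square)
    ultimately have "R y / s^2 \<le> \<mu>" by simp
    then show ?thesis using s0 by (simp add: s_def divide_le_eq mult.commute)
  qed
  define z where "z = H *v v - \<mu> *\<^sub>R v"
  have zW: "z \<in> W" unfolding z_def by (intro Wdiff Winv Wscale vW)
  have cvz: "cinner v z = 0"
    unfolding z_def by (simp add: cinner_diff_right cinner_scaleR_right cvHv cvv)
  have czv: "cinner z v = 0" using cvz by (metis cinner_commute complex_cnj_zero)
  have Hv: "H *v v = z + \<mu> *\<^sub>R v" by (simp add: z_def)
  have czHv: "cinner z (H *v v) = cinner z z"
    by (simp add: Hv cinner_add_right cinner_scaleR_right czv)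
  have cvHz: "cinner v (H *v z) = cinner z z"
    by (simp add: hh Hv cinner_add_left cinner_scaleR_left cvz)
  define nz where "nz = (norm z)^2"
  have czz: "cinner z z = of_real nz" by (simp add: nz_def cinner_self)
  define C where "C = \<mu> * nz - Re (cinner z (H *v z))"
  have ineq: "2 * t * nz \<le> t^2 * C" if t: "t > 0" for t :: real
  proof -
    define y where "y = v + t *\<^sub>R z"
    have cyy: "cinner y y = 1 + of_real (t^2 * nz)"
      unfolding y_def by (simp add: cinner_add_left cinner_add_right cinner_scaleR_left
          cinner_scaleR_right cvv cvz czv czz power2_eq_square)
    have ny: "(norm y)^2 = 1 + t^2 * nz"
      using cyy by (metis cinner_self of_real_1 of_real_add of_real_eq_iff)
    have "y \<noteq> 0" using ny by (metis nz_def add_pos_nonneg norm_zero power2_eq_square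
          mult_nonneg_nonneg zero_le_power2 less_numeral_extra(3) zero_less_one mult_zero_left)
    moreover have yW: "y \<in> W" unfolding y_def by (intro Wadd Wscale vW zW)
    ultimately have "R y \<le> \<mu> * (1 + t^2 * nz)" using bound ny by metis
    moreover have "R y = \<mu> + 2 * t * nz + t^2 * Re (cinner z (H *v z))"
    proof -
      have "cinner y (H *v y) = cinner v (H *v v) + of_real t * cinner v (H *v z)
              + of_real t * cinner z (H *v v) + of_real t * of_real t * cinner z (H *v z)"
        unfolding y_def by (simp add: matrix_vector_right_distrib mv_scaleR cinner_add_left
            cinner_add_right cinner_scaleR_left cinner_scaleR_right algebra_simps)
      then show ?thesis unfolding R_def
        by (simp add: cvHv cvHz czHv czz power2_eq_square)
    qed
    ultimately show ?thesis by (simp add: C_def algebra_simps)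
  qed
  have "nz = 0"
  proof (rule ccontr)
    assume "nz \<noteq> 0"
    then have nzp: "nz > 0" using nz_def by simp
    define t where "t = nz / (\<bar>C\<bar> + 1)"
    have tp: "t > 0" using nzp by (simp add: t_def)
    have "2 * t * nz \<le> t^2 * C" using ineq[OF tp] .
    then have "2 * nz \<le> t * C" using tp by (simp add: power2_eq_square)
    also have "t * C \<le> t * \<bar>C\<bar>" using tp by (simp add: mult_left_mono)
    also have "t * \<bar>C\<bar> < nz"
    proof -
      have "t * \<bar>C\<bar> = nz * (\<bar>C\<bar> / (\<bar>C\<bar> + 1))" by (simp add: t_def)
      also have "\<dots> < nz * 1" using nzp by (intro mult_strict_left_mono) auto
      finally show ?thesis by simp
    qed
    finally show False using nzp by simp
  qed
  then have "z = 0" by (simp add: nz_def)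
  then have "H *v v = \<mu> *\<^sub>R v" using Hv by simp
  then show ?thesis using vW nv by (auto simp: W_def)
qed

definition orthonormal_set :: "(complex^'n) set \<Rightarrow> bool" where
  "orthonormal_set F \<longleftrightarrow> (\<forall>f\<in>F. \<forall>g\<in>F. cinner f g = (if f = g then 1 else 0))"

lemma onb_exists:
  fixes H :: "complex^'n^'n"
  assumes hH: "hermi H"
  shows "\<exists>F. finite F \<and> card F = CARD('n) \<and> orthonormal_set F \<and> (\<forall>f\<in>F. \<exists>\<mu>::real. H *v f = \<mu> *\<^sub>R f)"
proof -
  have "k \<le> CARD('n) \<Longrightarrow> \<exists>F. finite F \<and> card F = k \<and> orthonormal_set F \<and> (\<forall>f\<in>F. \<exists>\<mu>::real. H *v f = \<mu> *\<^sub>R f)" for k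
  proof (induction k)
    case 0
    then show ?case by (intro exI[of _ "{}"]) (auto simp: orthonormal_set_def)
  next
    case (Suc k)
    then obtain F where fin: "finite F" and cF: "card F = k" and on: "orthonormal_set F"
      and eig: "\<forall>f\<in>F. \<exists>\<mu>::real. H *v f = \<mu> *\<^sub>R f" by auto
    have "\<exists>x. x \<notin> vec.span F"
    proof (rule ccontr)
      assume "\<not> ?thesis"
      then have "UNIV \<subseteq> vec.span F" by auto
      then have "vec.dim (UNIV :: (complex^'n) set) \<le> card F" using fin by (rule vec.dim_le_card)
      moreover have "vec.dim (UNIV::(complex^'n) set) = CARD('n)" by (rule vec_dim_card)
      ultimately show False using cF Suc.prems by linarith
    qed
    then obtain x where x: "x \<notin> vec.span F" by blast
    define w where "w = x - (\<Sum>f\<in>F. cinner f x *s f)"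
    have wW: "\<forall>g\<in>F. cinner g w = 0"
    proof
      fix g assume g: "g \<in> F"
      have "cinner g (\<Sum>f\<in>F. cinner f x *s f) = (\<Sum>f\<in>F. cinner f x * cinner g f)"
        using fin by (simp add: cinner_sum_right cinner_scale_right)
      also have "\<dots> = (\<Sum>f\<in>F. if f = g then cinner g x else 0)"
        using on g by (intro sum.cong refl) (auto simp: orthonormal_set_def)
      also have "\<dots> = cinner g x" using fin g by simp
      finally show "cinner g w = 0" by (simp add: w_def cinner_diff_right)
    qed
    have w0: "w \<noteq> 0"
    proof
      assume "w = 0"
      then have "x = (\<Sum>f\<in>F. cinner f x *s f)" by (simp add: w_def)
      also have "\<dots> \<in> vec.span F"
        by (intro vec.span_sum vec.span_scale vec.span_base)
      finally show False using x by simp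
    qed
    obtain v where vW: "\<forall>f\<in>F. cinner f v = 0" and nv: "norm v = 1"
      and ev: "\<exists>\<mu>::real. H *v v = \<mu> *\<^sub>R v"
      using eigen_in_subspace[OF hH fin eig w0 wW] by blast
    have cvv: "cinner v v = 1" using nv by (simp add: cinner_self)
    have vF: "v \<notin> F" using vW cvv by fastforce
    have "orthonormal_set (insert v F)"
      unfolding orthonormal_set_def
    proof (intro ballI)
      fix f g assume f: "f \<in> insert v F" and g: "g \<in> insert v F"
      show "cinner f g = (if f = g then 1 else 0)"
      proof (cases "f = v")
        case True
        then show ?thesis using g vF cvv vW
          by (cases "g = v") (auto, metis cinner_commute complex_cnj_zero)
      next
        case False
        then show ?thesis using f g vF vW on by (cases "g = v") (auto simp: orthonormal_set_def)
      qed
    qed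
    then show ?case using fin cF vF eig ev
      by (intro exI[of _ "insert v F"]) auto
  qed
  then show ?thesis by blast
qed

lemma spectral:
  fixes H :: "complex^'n^'n"
  assumes hH: "hermi H"
  shows "\<exists>U l. unitary_mat U \<and> H = U ** diag_mat l ** cadj U"
proof -
  obtain F where fin: "finite F" and cF: "card F = CARD('n)" and on: "orthonormal_set F"
    and eig: "\<forall>f\<in>F. \<exists>\<mu>::real. H *v f = \<mu> *\<^sub>R f" using onb_exists[OF hH] by blast
  obtain h where bh: "bij_betw h (UNIV :: 'n set) F"
    using finite_same_card_bij[of "UNIV::'n set" F] fin cF by auto
  have hF: "h i \<in> F" for i using bh by (auto simp: bij_betw_def)
  have hinj: "h i = h j \<longleftrightarrow> i = j" for i j using bh by (auto simp: bij_betw_def inj_on_def)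
  define l where "l i = (SOME \<mu>. H *v h i = \<mu> *\<^sub>R h i)" for i
  have hl: "H *v h i = l i *\<^sub>R h i" for i
    unfolding l_def by (rule someI_ex) (use eig hF in blast)
  define U :: "complex^'n^'n" where "U = (\<chi> r i. h i $ r)"
  have UU: "cadj U ** U = mat 1"
  proof -
    have "(cadj U ** U) $ i $ j = cinner (h i) (h j)" for i j
      by (simp add: U_def cadj_def matrix_matrix_mult_def cinner_def)
    also have "cinner (h i) (h j) = (if i = j then 1 else 0)" for i j
      using on hF hinj by (simp add: orthonormal_set_def)
    finally show ?thesis by (simp add: vec_eq_iff mat_def)
  qed
  then have UU': "U ** cadj U = mat 1" by (simp add: matrix_left_right_inverse)
  have HU: "H ** U = U ** diag_mat l"
  proof -
    have "(H ** U) $ r $ i = (H *v h i) $ r" for r i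
      by (simp add: U_def matrix_matrix_mult_def matrix_vector_mult_def)
    moreover have "(U ** diag_mat l) $ r $ i = h i $ r * of_real (l i)" for r i
    proof -
      have "\<And>s. U $ r $ s * diag_mat l $ s $ i = (if s = i then h i $ r * of_real (l i) else 0)"
        by (simp add: U_def diag_mat_def)
      then show ?thesis by (simp add: matrix_matrix_mult_def)
    qed
    moreover have "(H *v h i) $ r = h i $ r * of_real (l i)" for r i
      unfolding hl scaleR_vec_def by (simp add: scaleR_conv_of_real mult.commute)
    ultimately show ?thesis
      by (simp add: vec_eq_iff)
  qed
  have "H = H ** (U ** cadj U)" by (simp add: UU')
  also have "\<dots> = (H ** U) ** cadj U" by (simp add: matrix_mul_assoc)
  also have "\<dots> = U ** diag_mat l ** cadj U" by (simp add: HU)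
  finally show ?thesis using UU UU' unfolding unitary_mat_def by blast
qed

lemma matrix_add_rdistrib': "((B + C) ** (A::'a::semiring_1^'n^'m)) = (B ** A) + (C ** A)"
  by (simp add: matrix_matrix_mult_def vec_eq_iff sum.distrib distrib_right)

lemma mmult_scaleR_left: "(c *\<^sub>R A) ** (B::complex^'n^'m) = c *\<^sub>R (A ** B)"
  unfolding matrix_matrix_mult_def scaleR_vec_def
  by (simp add: vec_eq_iff scaleR_sum_right)

lemma mmult_scaleR_right: "(A::complex^'m^'k) ** (c *\<^sub>R B) = c *\<^sub>R (A ** B)"
  unfolding matrix_matrix_mult_def scaleR_vec_def
  by (simp add: vec_eq_iff scaleR_sum_right)

lemma diag_mult: "diag_mat a ** diag_mat b = diag_mat (\<lambda>i. a i * b i)"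
proof -
  have "\<And>i j k. diag_mat a $ i $ k * diag_mat b $ k $ j = (if k = i then (if i = j then complex_of_real (a i * b i) else 0) else 0)"
    by (simp add: diag_mat_def)
  then show ?thesis by (simp add: matrix_matrix_mult_def vec_eq_iff diag_mat_def)
qed

lemma diag_add: "diag_mat a + diag_mat b = diag_mat (\<lambda>i. a i + b i)"
  by (simp add: diag_mat_def vec_eq_iff)

lemma diag_scale: "c *\<^sub>R diag_mat a = diag_mat (\<lambda>i. c * a i)"
  unfolding scaleR_vec_def by (simp add: diag_mat_def vec_eq_iff scaleR_conv_of_real)

lemma diag_const: "diag_mat (\<lambda>i. c) = c *\<^sub>R mat 1"
  unfolding scaleR_vec_def by (simp add: diag_mat_def vec_eq_iff mat_def scaleR_conv_of_real)

lemma trace_diag: "trace (diag_mat a) = of_real (\<Sum>i\<in>UNIV. a i)"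
  by (simp add: trace_def diag_mat_def)

lemma unitary_conj_mult:
  assumes "unitary_mat U"
  shows "(U ** A ** cadj U) ** (U ** B ** cadj U) = U ** (A ** B) ** cadj U"
proof -
  have "(U ** A ** cadj U) ** (U ** B ** cadj U) = U ** A ** (cadj U ** U) ** B ** cadj U"
    by (simp add: matrix_mul_assoc)
  also have "\<dots> = U ** A ** B ** cadj U" using assms by (simp add: unitary_mat_def)
  finally show ?thesis by (simp add: matrix_mul_assoc)
qed

lemma unitary_trace:
  assumes "unitary_mat U"
  shows "trace (U ** A ** cadj U) = trace A"
proof -
  have "trace (U ** A ** cadj U) = trace (cadj U ** (U ** A))" by (rule trace_mul_sym)
  also have "\<dots> = trace A" using assms by (simp add: unitary_mat_def matrix_mul_assoc)
  finally show ?thesis .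
qed

lemma continuous_on_mmult[continuous_intros]:
  fixes f :: "'z::topological_space \<Rightarrow> complex^'n^'m" and g :: "'z \<Rightarrow> complex^'k^'n"
  shows "continuous_on S f \<Longrightarrow> continuous_on S g \<Longrightarrow> continuous_on S (\<lambda>x. f x ** g x)"
  unfolding matrix_matrix_mult_def by (intro continuous_intros continuous_on_vec_lambda)

lemma poly_calc:
  fixes q :: "real \<Rightarrow> real"
  assumes "real_polynomial_function q"
  shows "\<exists>Q :: complex^'n^'n \<Rightarrow> complex^'n^'n. continuous_on UNIV Q \<and>
           (\<forall>U l. unitary_mat U \<longrightarrow> Q (U ** diag_mat l ** cadj U) = U ** diag_mat (q \<circ> l) ** cadj U)"
  using assms
proof (induction rule: real_polynomial_function.induct)
  case (linear f)
  have fx: "f x = f 1 * x" for x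
    using linear_scale_real[OF bounded_linear.linear[OF linear], of x 1] by simp
  show ?case
  proof (intro exI[of _ "\<lambda>X. f 1 *\<^sub>R X"] conjI allI impI)
    show "continuous_on UNIV (\<lambda>X::complex^'n^'n. f 1 *\<^sub>R X)" by (intro continuous_intros)
    fix U :: "complex^'n^'n" and l :: "'n \<Rightarrow> real"
    have "f \<circ> (l::'n \<Rightarrow> real) = (\<lambda>i. f 1 * l i)" unfolding o_def by (rule ext, rule fx)
    then have "diag_mat (f \<circ> l) = f 1 *\<^sub>R diag_mat l" by (simp add: diag_scale)
    then show "f 1 *\<^sub>R (U ** diag_mat l ** cadj U) = U ** diag_mat (f \<circ> l) ** cadj U"
      by (simp add: mmult_scaleR_left mmult_scaleR_right)
  qed
next
  case (const c)
  show ?case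
  proof (intro exI[of _ "\<lambda>X. c *\<^sub>R mat 1"] conjI allI impI)
    show "continuous_on UNIV (\<lambda>X::complex^'n^'n. c *\<^sub>R mat 1)" by (intro continuous_intros)
    fix U :: "complex^'n^'n" and l :: "'n \<Rightarrow> real"
    assume "unitary_mat U"
    then show "c *\<^sub>R mat 1 = U ** diag_mat ((\<lambda>x. c) \<circ> l) ** cadj U"
      by (simp add: o_def diag_const mmult_scaleR_left mmult_scaleR_right unitary_mat_def)
  qed
next
  case (add f g)
  then obtain F G :: "complex^'n^'n \<Rightarrow> complex^'n^'n" where
    F: "continuous_on UNIV F" "\<forall>U l. unitary_mat U \<longrightarrow> F (U ** diag_mat l ** cadj U) = U ** diag_mat (f \<circ> l) ** cadj U"
    and G: "continuous_on UNIV G" "\<forall>U l. unitary_mat U \<longrightarrow> G (U ** diag_mat l ** cadj U) = U ** diag_mat (g \<circ> l) ** cadj U"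
    by blast
  show ?case
  proof (intro exI[of _ "\<lambda>X. F X + G X"] conjI allI impI)
    show "continuous_on UNIV (\<lambda>X. F X + G X)" using F G by (intro continuous_intros)
    fix U :: "complex^'n^'n" and l :: "'n \<Rightarrow> real"
    assume U: "unitary_mat U"
    have "diag_mat ((\<lambda>x. f x + g x) \<circ> l) = diag_mat (f \<circ> l) + diag_mat (g \<circ> l)"
      by (simp add: diag_add o_def)
    then show "F (U ** diag_mat l ** cadj U) + G (U ** diag_mat l ** cadj U) = U ** diag_mat ((\<lambda>x. f x + g x) \<circ> l) ** cadj U"
      using F G U by (simp add: matrix_add_ldistrib matrix_add_rdistrib')
  qed
next
  case (mult f g)
  then obtain F G :: "complex^'n^'n \<Rightarrow> complex^'n^'n" where
    F: "continuous_on UNIV F" "\<forall>U l. unitary_mat U \<longrightarrow> F (U ** diag_mat l ** cadj U) = U ** diag_mat (f \<circ> l) ** cadj U"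
    and G: "continuous_on UNIV G" "\<forall>U l. unitary_mat U \<longrightarrow> G (U ** diag_mat l ** cadj U) = U ** diag_mat (g \<circ> l) ** cadj U"
    by blast
  show ?case
  proof (intro exI[of _ "\<lambda>X. F X ** G X"] conjI allI impI)
    show "continuous_on UNIV (\<lambda>X. F X ** G X)" using F G by (intro continuous_intros)
    fix U :: "complex^'n^'n" and l :: "'n \<Rightarrow> real"
    assume U: "unitary_mat U"
    have "diag_mat ((\<lambda>x. f x * g x) \<circ> l) = diag_mat (f \<circ> l) ** diag_mat (g \<circ> l)"
      by (simp add: diag_mult o_def)
    then show "F (U ** diag_mat l ** cadj U) ** G (U ** diag_mat l ** cadj U) = U ** diag_mat ((\<lambda>x. f x * g x) \<circ> l) ** cadj U"
      using F G U by (simp add: unitary_conj_mult)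
  qed
qed

lemma mat_fun_spec:
  fixes M :: "complex^'n^'n"
  assumes "hermi M"
  shows "\<exists>U l. unitary_mat U \<and> M = U ** diag_mat l ** cadj U \<and> mat_fun f M = U ** diag_mat (f \<circ> l) ** cadj U"
proof -
  obtain U l where "unitary_mat U" "M = U ** diag_mat l ** cadj U" using spectral[OF assms] by blast
  then have ex: "\<exists>B U l. unitary_mat U \<and> M = U ** diag_mat l ** cadj U \<and> B = U ** diag_mat (f \<circ> l) ** cadj U"
    by blast
  show ?thesis unfolding mat_fun_def using someI_ex[OF ex] by blast
qed

definition col :: "complex^'n^'n \<Rightarrow> 'n \<Rightarrow> complex^'n" where
  "col U i = (\<chi> r. U $ r $ i)"

lemma conj_diag_entry: "(cadj U ** A ** U) $ i $ i = cinner (col U i) (A *v col U i)"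
proof -
  have "(cadj U ** A ** U) $ i $ i = (\<Sum>k\<in>UNIV. (\<Sum>j\<in>UNIV. cnj (U$j$i) * A$j$k) * U$k$i)"
    by (simp add: matrix_matrix_mult_def cadj_def)
  also have "\<dots> = (\<Sum>k\<in>UNIV. \<Sum>j\<in>UNIV. cnj (U$j$i) * A$j$k * U$k$i)"
    by (simp add: sum_distrib_right)
  also have "\<dots> = (\<Sum>j\<in>UNIV. \<Sum>k\<in>UNIV. cnj (U$j$i) * A$j$k * U$k$i)"
    by (rule sum.swap)
  also have "\<dots> = cinner (col U i) (A *v col U i)"
    by (simp add: cinner_def matrix_vector_mult_def col_def sum_distrib_left mult.assoc)
  finally show ?thesis .
qed

lemma decomp_diag:
  assumes U: "unitary_mat U" and M: "M = U ** diag_mat l ** cadj U"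
  shows "diag_mat l = cadj U ** M ** U"
proof -
  have "cadj U ** M ** U = (cadj U ** U) ** diag_mat l ** (cadj U ** U)"
    by (simp add: M matrix_mul_assoc)
  then show ?thesis using U by (simp add: unitary_mat_def)
qed

lemma psd_eig_nonneg:
  assumes "psd M" "unitary_mat U" "M = U ** diag_mat l ** cadj U"
  shows "l i \<ge> 0"
proof -
  have "complex_of_real (l i) = diag_mat l $ i $ i" by (simp add: diag_mat_def)
  also have "\<dots> = (cadj U ** M ** U) $ i $ i"
    using decomp_diag[OF assms(2,3)] by simp
  also have "\<dots> = cinner (col U i) (M *v col U i)" by (rule conj_diag_entry)
  finally have "l i = Re (cinner (col U i) (M *v col U i))"
    by (metis Re_complex_of_real)
  then show ?thesis using assms(1) unfolding psd_def by simp
qed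

lemma trace_decomp:
  assumes "unitary_mat U" "M = U ** diag_mat l ** cadj U"
  shows "trace M = of_real (\<Sum>i\<in>UNIV. l i)"
  using assms by (simp add: unitary_trace trace_diag)

lemma density_eig:
  assumes "density M" "unitary_mat U" "M = U ** diag_mat l ** cadj U"
  shows "l i \<in> {0..1}"
proof -
  have nn: "\<And>j. l j \<ge> 0" using assms psd_eig_nonneg density_def by blast
  have "trace M = of_real (\<Sum>i\<in>UNIV. l i)" using assms(2,3) by (rule trace_decomp)
  then have "of_real (\<Sum>i\<in>UNIV. l i) = (1::complex)"
    using assms(1) by (simp add: density_def)
  then have "(\<Sum>i\<in>UNIV. l i) = 1" by (simp only: of_real_eq_1_iff)
  moreover have "l i \<le> (\<Sum>i\<in>UNIV. l i)" using nn by (intro member_le_sum) auto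
  ultimately show ?thesis using nn by auto
qed

definition ent :: "complex^'n^'n \<Rightarrow> real" where
  "ent M = Re (trace (M ** mat_log M))"

definition xlogx :: "real \<Rightarrow> real" where
  "xlogx x = x * (if x > 0 then ln x else 0)"

lemma ent_decomp:
  assumes "hermi M"
  shows "\<exists>U l. unitary_mat U \<and> M = U ** diag_mat l ** cadj U \<and> ent M = (\<Sum>i\<in>UNIV. xlogx (l i))"
proof -
  obtain U l where U: "unitary_mat U" and M: "M = U ** diag_mat l ** cadj U"
    and L: "mat_log M = U ** diag_mat ((\<lambda>x. if x > 0 then ln x else 0) \<circ> l) ** cadj U"
    using mat_fun_spec[OF assms] unfolding mat_log_def by blast
  have "M ** mat_log M = U ** diag_mat (\<lambda>i. xlogx (l i)) ** cadj U"
    unfolding L by (subst M) (simp add: unitary_conj_mult[OF U] diag_mult xlogx_def o_def)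
  then have "ent M = (\<Sum>i\<in>UNIV. xlogx (l i))"
    unfolding ent_def by (simp add: unitary_trace[OF U] trace_diag)
  then show ?thesis using U M by blast
qed

lemma xlogx_cont: "continuous_on {0..1} xlogx"
proof -
  have eq: "xlogx x = x * ln x" if "x \<ge> 0" for x using that by (auto simp: xlogx_def)
  have "continuous_on {0..1} (\<lambda>x::real. x * ln x)"
  proof (clarsimp simp: continuous_on_eq_continuous_within)
    fix x :: real assume x: "0 \<le> x" "x \<le> 1"
    show "continuous (at x within {0..1}) (\<lambda>x. x * ln x)"
    proof (cases "x = 0")
      case True
      have "((\<lambda>x::real. x * ln x) \<longlongrightarrow> 0) (at_right 0)" by real_asymp
      then show ?thesis using True
        by (simp add: continuous_within at_within_Icc_at_right)
    next
      case False
      then have "x > 0" using x by auto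
      then have "isCont (\<lambda>x. x * ln x) x" by (intro continuous_intros) auto
      then show ?thesis using continuous_at_imp_continuous_at_within by blast
    qed
  qed
  then show ?thesis by (rule continuous_on_cong[THEN iffD1, rotated 2]) (auto simp: eq)
qed

lemma cont_by_approx:
  fixes f :: "'z::metric_space \<Rightarrow> real"
  assumes "\<And>e. e > 0 \<Longrightarrow> \<exists>\<phi>. continuous_on S \<phi> \<and> (\<forall>x\<in>S. \<bar>f x - \<phi> x\<bar> < e)"
  shows "continuous_on S f"
  unfolding continuous_on_iff
proof (intro ballI allI impI)
  fix x e assume x: "x \<in> S" and e: "(e::real) > 0"
  obtain \<phi> where c: "continuous_on S \<phi>" and a: "\<forall>x\<in>S. \<bar>f x - \<phi> x\<bar> < e/3"
    using assms[of "e/3"] e by auto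
  obtain d where d: "d > 0" "\<forall>x'\<in>S. dist x' x < d \<longrightarrow> dist (\<phi> x') (\<phi> x) < e/3"
    using c x e unfolding continuous_on_iff by (metis divide_pos_pos zero_less_numeral)
  show "\<exists>d>0. \<forall>x'\<in>S. dist x' x < d \<longrightarrow> dist (f x') (f x) < e"
  proof (intro exI[of _ d] conjI ballI impI)
    fix x' assume x': "x' \<in> S" "dist x' x < d"
    have "\<bar>\<phi> x' - \<phi> x\<bar> < e/3" using d x' by (simp add: dist_real_def)
    moreover have "\<bar>f x' - \<phi> x'\<bar> < e/3" "\<bar>f x - \<phi> x\<bar> < e/3" using a x x' by auto
    ultimately show "dist (f x') (f x) < e" unfolding dist_real_def by (simp only: abs_less_iff) linarith
  qed (use d in simp)
qed

lemma ent_cont: "continuous_on {M :: complex^'n^'n. density M} ent"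
proof (rule cont_by_approx)
  fix e :: real assume e: "e > 0"
  define e' where "e' = e / (2 * real CARD('n))"
  have e': "e' > 0" using e by (simp add: e'_def)
  obtain q where q: "real_polynomial_function q" and qa: "\<And>x. x \<in> {0..1} \<Longrightarrow> \<bar>xlogx x - q x\<bar> < e'"
    using Stone_Weierstrass_real_polynomial_function[OF compact_Icc xlogx_cont e'] by blast
  obtain Q :: "complex^'n^'n \<Rightarrow> complex^'n^'n" where Qc: "continuous_on UNIV Q"
    and QU: "\<And>U l. unitary_mat U \<Longrightarrow> Q (U ** diag_mat l ** cadj U) = U ** diag_mat (q \<circ> l) ** cadj U"
    using poly_calc[OF q] by blast
  show "\<exists>\<phi>. continuous_on {M::complex^'n^'n. density M} \<phi> \<and> (\<forall>x\<in>{M::complex^'n^'n. density M}. \<bar>ent x - \<phi> x\<bar> < e)"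
  proof (intro exI[of _ "\<lambda>M. Re (trace (Q M))"] conjI ballI)
    show "continuous_on {M::complex^'n^'n. density M} (\<lambda>M. Re (trace (Q M)))"
      unfolding trace_def
      by (intro continuous_intros continuous_on_subset[OF Qc]) auto
    fix M :: "complex^'n^'n" assume M: "M \<in> {M. density M}"
    then have hM: "hermi M" by (simp add: density_def psd_hermi)
    obtain U l where U: "unitary_mat U" and Md: "M = U ** diag_mat l ** cadj U"
      and E: "ent M = (\<Sum>i\<in>UNIV. xlogx (l i))" using ent_decomp[OF hM] by blast
    have lI: "l i \<in> {0..1}" for i using density_eig[OF _ U Md] M by simp
    have "Re (trace (Q M)) = (\<Sum>i\<in>UNIV. q (l i))"
      using QU[OF U, of l] Md by (simp add: unitary_trace[OF U] trace_diag)
    then have "\<bar>ent M - Re (trace (Q M))\<bar> = \<bar>\<Sum>i\<in>UNIV. xlogx (l i) - q (l i)\<bar>"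
      by (simp add: E sum_subtractf)
    also have "\<dots> \<le> (\<Sum>i\<in>UNIV. \<bar>xlogx (l i) - q (l i)\<bar>)" by (rule sum_abs)
    also have "\<dots> \<le> (\<Sum>i\<in>(UNIV::'n set). e')" using qa lI by (intro sum_mono) (simp add: less_imp_le)
    also have "\<dots> = real CARD('n) * e'" by simp
    also have "\<dots> < e" using e by (simp add: e'_def)
    finally show "\<bar>ent M - Re (trace (Q M))\<bar> < e" .
  qed
qed

lemma mv_sum: "finite A \<Longrightarrow> (\<Sum>k\<in>A. F k) *v (v::complex^'n) = (\<Sum>k\<in>A. F k *v v)"
  by (induct A rule: finite_induct) (auto simp: matrix_vector_mult_add_rdistrib)

lemma mmult_sum_left: "finite A \<Longrightarrow> (\<Sum>k\<in>A. F k) ** (X::complex^'n^'m) = (\<Sum>k\<in>A. F k ** X)"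
  by (induct A rule: finite_induct) (auto simp: matrix_add_rdistrib')

lemma trace_sum: "finite A \<Longrightarrow> trace (\<Sum>k\<in>A. F k) = (\<Sum>k\<in>A. trace (F k :: complex^'n^'n))"
  by (induct A rule: finite_induct) (auto simp: trace_add trace_0[simplified])

lemma Re_sum_nonneg_real:
  assumes "\<And>k. k \<in> A \<Longrightarrow> f k \<in> \<real> \<and> 0 \<le> Re (f k)"
  shows "(\<Sum>k\<in>A. f k) \<in> \<real> \<and> 0 \<le> Re (\<Sum>k\<in>A. f k)"
  using assms by (auto intro: sum_in_Reals sum_nonneg simp: Re_sum)

lemma kraus_apply: "(K ** X ** cadj K) *v v = K *v (X *v (cadj K *v v))"
  by (simp add: matrix_vector_mul_assoc matrix_mul_assoc)

lemma kraus_inner: "cinner v ((K ** X ** cadj K) *v v) = cinner (cadj K *v v) (X *v (cadj K *v v))"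
  by (simp add: kraus_apply cinner_adj)

lemma channel_form:
  fixes N :: "complex^'a^'a \<Rightarrow> complex^'b^'b"
  assumes "tpcp N"
  obtains m :: nat and K where "N = (\<lambda>X. \<Sum>k<m. K k ** X ** cadj (K k))" "(\<Sum>k<m. cadj (K k) ** K k) = mat 1"
  using assms unfolding tpcp_def by blast

lemma channel_form1:
  fixes N :: "complex^'a^'a \<Rightarrow> complex^'b^'b"
  assumes "tpcp N"
  obtains m :: nat and K where "N = (\<lambda>X. \<Sum>k<m. K k ** X ** cadj (K k))"
  using assms unfolding tpcp_def by blast

lemma channel_psd:
  assumes "tpcp (N :: complex^'a^'a \<Rightarrow> complex^'b^'b)" "psd X"
  shows "psd (N X)"
proof -
  obtain K and m :: nat where N: "N = (\<lambda>X. \<Sum>k<m. K k ** X ** cadj (K k))" by (rule channel_form1[OF assms(1)])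
  show ?thesis unfolding psd_def
  proof
    fix v :: "complex^'b"
    have "N X *v v = (\<Sum>k<m. (K k ** X ** cadj (K k)) *v v)"
      unfolding N by (rule mv_sum) simp
    then have "cinner v (N X *v v) = (\<Sum>k<m. cinner v ((K k ** X ** cadj (K k)) *v v))"
      by (simp add: cinner_sum_right)
    also have "\<dots> = (\<Sum>k<m. cinner (cadj (K k) *v v) (X *v (cadj (K k) *v v)))"
      by (simp add: kraus_inner)
    finally have "cinner v (N X *v v) = (\<Sum>k<m. cinner (cadj (K k) *v v) (X *v (cadj (K k) *v v)))" .
    moreover have "(\<Sum>k<m. cinner (cadj (K k) *v v) (X *v (cadj (K k) *v v))) \<in> \<real> \<and>
       0 \<le> Re (\<Sum>k<m. cinner (cadj (K k) *v v) (X *v (cadj (K k) *v v)))"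
      by (intro Re_sum_nonneg_real) (use assms(2) in \<open>simp add: psd_def\<close>)
    ultimately show "cinner v (N X *v v) \<in> \<real> \<and> 0 \<le> Re (cinner v (N X *v v))" by simp
  qed
qed

lemma channel_trace:
  assumes "tpcp (N :: complex^'a^'a \<Rightarrow> complex^'b^'b)"
  shows "trace (N X) = trace X"
proof -
  obtain K and m :: nat where N: "N = (\<lambda>X. \<Sum>k<m. K k ** X ** cadj (K k))"
    and S: "(\<Sum>k<m. cadj (K k) ** K k) = mat 1" by (rule channel_form[OF assms(1)])
  have "trace (N X) = (\<Sum>k<m. trace (K k ** X ** cadj (K k)))" by (simp add: N trace_sum)
  also have "\<dots> = (\<Sum>k<m. trace (cadj (K k) ** K k ** X))"
  proof (intro sum.cong refl)
    fix k
    have "trace ((K k ** X) ** cadj (K k)) = trace (cadj (K k) ** (K k ** X))" by (rule trace_mul_sym)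
    then show "trace (K k ** X ** cadj (K k)) = trace (cadj (K k) ** K k ** X)"
      by (simp add: matrix_mul_assoc)
  qed
  also have "\<dots> = trace ((\<Sum>k<m. cadj (K k) ** K k) ** X)" by (simp add: mmult_sum_left trace_sum)
  also have "\<dots> = trace X" by (simp add: S)
  finally show ?thesis .
qed

lemma channel_density:
  assumes "tpcp (N :: complex^'a^'a \<Rightarrow> complex^'b^'b)" "density X"
  shows "density (N X)"
  using assms channel_psd[OF assms(1)] channel_trace[OF assms(1)] unfolding density_def by simp

lemma channel_cont:
  assumes "tpcp (N :: complex^'a^'a \<Rightarrow> complex^'b^'b)"
  shows "continuous_on S N"
proof -
  obtain K and m :: nat where N: "N = (\<lambda>X. \<Sum>k<m. K k ** X ** cadj (K k))" by (rule channel_form1[OF assms(1)])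
  show ?thesis unfolding N by (intro continuous_intros continuous_on_sum)
qed

lemma trace_mult_diag: "trace (C ** diag_mat l) = (\<Sum>i\<in>UNIV. C $ i $ i * of_real (l i))"
proof -
  have "(C ** diag_mat l) $ i $ i = C $ i $ i * of_real (l i)" for i
  proof -
    have "(C ** diag_mat l) $ i $ i = (\<Sum>k\<in>UNIV. C $ i $ k * diag_mat l $ k $ i)"
      by (simp add: matrix_matrix_mult_def)
    also have "\<dots> = (\<Sum>k\<in>UNIV. if k = i then C $ i $ i * of_real (l i) else 0)"
      by (rule sum.cong) (auto simp: diag_mat_def)
    also have "\<dots> = C $ i $ i * of_real (l i)" by simp
    finally show ?thesis .
  qed
  then show ?thesis by (simp add: trace_def)
qed

lemma psd_trace_nonneg:
  assumes A: "psd A" and B: "psd B"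
  shows "0 \<le> Re (trace (A ** B))"
proof -
  obtain U l where U: "unitary_mat U" and Ad: "A = U ** diag_mat l ** cadj U"
    using spectral[OF psd_hermi[OF A]] by blast
  have l0: "l i \<ge> 0" for i using psd_eig_nonneg[OF A U Ad] .
  have "trace (A ** B) = trace ((U ** diag_mat l) ** (cadj U ** B))" by (simp add: Ad matrix_mul_assoc)
  also have "\<dots> = trace ((cadj U ** B) ** (U ** diag_mat l))" by (rule trace_mul_sym)
  also have "\<dots> = trace ((cadj U ** B ** U) ** diag_mat l)" by (simp add: matrix_mul_assoc)
  also have "\<dots> = (\<Sum>i\<in>UNIV. cinner (col U i) (B *v col U i) * of_real (l i))"
    by (simp add: trace_mult_diag conj_diag_entry)
  finally have "Re (trace (A ** B)) = (\<Sum>i\<in>UNIV. Re (cinner (col U i) (B *v col U i)) * l i)"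
    by (simp add: Re_sum)
  also have "\<dots> \<ge> 0" using B l0 unfolding psd_def by (intro sum_nonneg mult_nonneg_nonneg) auto
  finally show ?thesis .
qed

lemma psd_zero:
  assumes A: "psd A" and z: "cinner v (A *v v) = 0"
  shows "A *v v = 0"
proof -
  define w where "w = A *v v"
  define nw where "nw = (norm w)^2"
  have cww: "cinner w w = of_real nw" by (simp add: nw_def cinner_self)
  have cvw: "cinner v (A *v w) = cinner w w" by (simp add: w_def psd_inner[OF A])
  have cwv: "cinner w (A *v v) = cinner w w" by (simp add: w_def)
  define c where "c = Re (cinner w (A *v w))"
  have ineq: "2 * s * nw \<le> s^2 * c" if s: "s > 0" for s :: real
  proof -
    have ex: "cinner (v + t *\<^sub>R w) (A *v (v + t *\<^sub>R w)) =
        cinner v (A *v v) + of_real t * cinner v (A *v w) + of_real t * cinner w (A *v v)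
        + of_real t * of_real t * cinner w (A *v w)" for t
      by (simp add: matrix_vector_right_distrib mv_scaleR cinner_add_left
            cinner_add_right cinner_scaleR_left cinner_scaleR_right algebra_simps)
    have "0 \<le> Re (cinner (v + (-s) *\<^sub>R w) (A *v (v + (-s) *\<^sub>R w)))"
      using A unfolding psd_def by blast
    also have "cinner (v + (-s) *\<^sub>R w) (A *v (v + (-s) *\<^sub>R w)) =
        cinner v (A *v v) + of_real (-s) * cinner v (A *v w) + of_real (-s) * cinner w (A *v v)
        + of_real (-s) * of_real (-s) * cinner w (A *v w)"
      by (rule ex)
    finally show ?thesis using z by (simp add: cvw cwv cww c_def power2_eq_square mult_ac)
  qed
  have "nw = 0"
  proof (rule ccontr)
    assume "nw \<noteq> 0"
    then have nzp: "nw > 0" using nw_def by simp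
    define t where "t = nw / (\<bar>c\<bar> + 1)"
    have tp: "t > 0" using nzp by (simp add: t_def)
    have "2 * t * nw \<le> t^2 * c" using ineq[OF tp] .
    then have "2 * nw \<le> t * c" using tp by (simp add: power2_eq_square)
    also have "t * c \<le> t * \<bar>c\<bar>" using tp by (simp add: mult_left_mono)
    also have "t * \<bar>c\<bar> < nw"
    proof -
      have "t * \<bar>c\<bar> = nw * (\<bar>c\<bar> / (\<bar>c\<bar> + 1))" by (simp add: t_def)
      also have "\<dots> < nw * 1" using nzp by (intro mult_strict_left_mono) auto
      finally show ?thesis by simp
    qed
    finally show False using nzp by simp
  qed
  then show ?thesis by (simp add: nw_def w_def)
qed

lemma ker_sub:
  assumes \<rho>: "psd \<rho>" and \<sigma>: "psd \<sigma>" and s: "supp \<rho> \<subseteq> supp \<sigma>" and v: "\<sigma> *v v = 0"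
  shows "\<rho> *v v = 0"
proof -
  have "\<rho> *v (\<rho> *v v) \<in> supp \<sigma>" using s by (auto simp: supp_def)
  then obtain y where y: "\<rho> *v (\<rho> *v v) = \<sigma> *v y" by (auto simp: supp_def)
  have "cinner (\<rho> *v v) (\<rho> *v v) = cinner v (\<rho> *v (\<rho> *v v))" by (simp add: psd_inner[OF \<rho>])
  also have "\<dots> = cinner v (\<sigma> *v y)" by (simp add: y)
  also have "\<dots> = 0" by (simp add: psd_inner[OF \<sigma>] v)
  finally show ?thesis by (simp add: cinner_self)
qed

lemma channel_ker:
  assumes N: "tpcp (N :: complex^'a^'a \<Rightarrow> complex^'b^'b)" and \<rho>: "psd \<rho>" and \<sigma>: "psd \<sigma>"
    and ker: "\<And>w. \<sigma> *v w = 0 \<Longrightarrow> \<rho> *v w = 0" and v: "N \<sigma> *v v = 0"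
  shows "N \<rho> *v v = 0"
proof -
  obtain K and m :: nat where Nf: "N = (\<lambda>X. \<Sum>k<m. K k ** X ** cadj (K k))" by (rule channel_form1[OF N])
  define t where "t k = cinner (cadj (K k) *v v) (\<sigma> *v (cadj (K k) *v v))" for k
  have tR: "t k \<in> \<real> \<and> 0 \<le> Re (t k)" for k using \<sigma> unfolding psd_def t_def by blast
  have "N \<sigma> *v v = (\<Sum>k<m. (K k ** \<sigma> ** cadj (K k)) *v v)"
    unfolding Nf by (rule mv_sum) simp
  then have "(\<Sum>k<m. t k) = cinner v (N \<sigma> *v v)"
    by (simp add: cinner_sum_right kraus_inner t_def)
  also have "\<dots> = 0" using v by simp
  finally have "Re (\<Sum>k<m. t k) = 0" by simp
  then have "(\<Sum>k<m. Re (t k)) = 0" by (simp add: Re_sum)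
  then have "\<forall>k\<in>{..<m}. Re (t k) = 0" using tR by (subst sum_nonneg_eq_0_iff[symmetric]) auto
  then have "t k = 0" if "k < m" for k using tR[of k] that
    by (simp add: complex_eq_iff complex_is_Real_iff)
  then have "\<sigma> *v (cadj (K k) *v v) = 0" if "k < m" for k
    using that by (intro psd_zero[OF \<sigma>]) (simp add: t_def)
  then have "\<rho> *v (cadj (K k) *v v) = 0" if "k < m" for k using that ker by blast
  moreover have "N \<rho> *v v = (\<Sum>k<m. (K k ** \<rho> ** cadj (K k)) *v v)"
    unfolding Nf by (rule mv_sum) simp
  ultimately show ?thesis by (simp add: kraus_apply)
qed

lemma diag_mv: "diag_mat a *v c = (\<chi> i. of_real (a i) * c $ i)"
proof -
  have "\<And>i j. diag_mat a $ i $ j * c $ j = (if j = i then of_real (a i) * c $ i else 0)"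
    by (simp add: diag_mat_def)
  then show ?thesis by (simp add: matrix_vector_mult_def vec_eq_iff)
qed

lemma range_from_ker:
  assumes B: "psd B" and A: "psd A" and ker: "\<And>w. B *v w = 0 \<Longrightarrow> A *v w = 0"
  shows "supp A \<subseteq> supp B"
proof
  fix w assume "w \<in> supp A"
  then obtain z where wz: "w = A *v z" by (auto simp: supp_def)
  obtain U l where U: "unitary_mat U" and Bd: "B = U ** diag_mat l ** cadj U"
    using spectral[OF psd_hermi[OF B]] by blast
  have UU: "cadj U ** U = mat 1" "U ** cadj U = mat 1" using U by (auto simp: unitary_mat_def)
  define c where "c = cadj U *v w"
  have c0: "c $ i = 0" if li: "l i = 0" for i
  proof -
    have colU: "col U i = U *v axis i 1"
    proof -
      have "\<And>r k. U $ r $ k * axis i 1 $ k = (if k = i then U $ r $ i else 0)" by (simp add: axis_def)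
      then show ?thesis by (simp add: col_def matrix_vector_mult_def vec_eq_iff)
    qed
    have dl: "diag_mat l *v axis i 1 = 0" using li by (simp add: diag_mv axis_def vec_eq_iff)
    have "B *v col U i = U *v (diag_mat l *v ((cadj U ** U) *v axis i 1))"
      by (simp add: Bd colU matrix_vector_mul_assoc matrix_mul_assoc)
    also have "\<dots> = U *v (diag_mat l *v axis i 1)" by (simp only: UU(1) matrix_vector_mul_lid)
    also have "\<dots> = 0" by (simp only: dl matrix_vector_mult_0_right)
    finally have "A *v col U i = 0" using ker by blast
    have "c $ i = cinner (col U i) w"
      by (simp add: c_def cadj_def matrix_vector_mult_def cinner_def col_def)
    also have "\<dots> = cinner (A *v col U i) z" by (simp add: wz psd_inner[OF A])
    also have "\<dots> = 0" using \<open>A *v col U i = 0\<close> by simp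
    finally show ?thesis .
  qed
  define y where "y = U *v (diag_mat (\<lambda>i. if l i = 0 then 0 else 1 / l i) *v c)"
  have "B *v y = U *v (diag_mat l *v ((cadj U ** U) *v (diag_mat (\<lambda>i. if l i = 0 then 0 else 1 / l i) *v c)))"
    by (simp add: y_def Bd matrix_vector_mul_assoc matrix_mul_assoc)
  also have "\<dots> = U *v c"
  proof -
    have "diag_mat l *v (diag_mat (\<lambda>i. if l i = 0 then 0 else 1 / l i) *v c) = c"
      using c0 by (auto simp: diag_mv vec_eq_iff)
    then show ?thesis using UU by simp
  qed
  also have "\<dots> = w" by (simp add: c_def matrix_vector_mul_assoc UU)
  finally show "w \<in> supp B" by (auto simp: supp_def)
qed

lemma channel_supp:
  assumes N: "tpcp (N :: complex^'a^'a \<Rightarrow> complex^'b^'b)" and \<rho>: "psd \<rho>" and \<sigma>: "psd \<sigma>"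
    and s: "supp \<rho> \<subseteq> supp \<sigma>"
  shows "supp (N \<rho>) \<subseteq> supp (N \<sigma>)"
proof (rule range_from_ker)
  show "psd (N \<sigma>)" "psd (N \<rho>)" using channel_psd N \<rho> \<sigma> by auto
  fix w assume "N \<sigma> *v w = 0"
  then show "N \<rho> *v w = 0" using channel_ker[OF N \<rho> \<sigma>] ker_sub[OF \<rho> \<sigma> s] by blast
qed

definition lsc_at :: "'z filter \<Rightarrow> ('z \<Rightarrow> ereal) \<Rightarrow> ereal \<Rightarrow> bool" where
  "lsc_at F g v \<longleftrightarrow> (\<forall>r::real. ereal r < v \<longrightarrow> eventually (\<lambda>y. ereal r < g y) F)"

lemma lsc_add:
  assumes f: "lsc_at F f a" and g: "lsc_at F g b" and a: "a \<noteq> -\<infinity>" and b: "b \<noteq> -\<infinity>"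
  shows "lsc_at F (\<lambda>y. f y + g y) (a + b)"
  unfolding lsc_at_def
proof (intro allI impI)
  fix r :: real assume r: "ereal r < a + b"
  have "\<exists>a' b'. a' + b' = r \<and> ereal a' < a \<and> ereal b' < b"
  proof (cases a)
    case (real x) note ax = this
    show ?thesis
    proof (cases b)
      case (real y)
      then have "r < x + y" using r ax by simp
      then show ?thesis using ax real
        by (intro exI[of _ "x - (x + y - r)/2"] exI[of _ "y - (x + y - r)/2"]) auto
    next
      case PInf
      then show ?thesis using ax by (intro exI[of _ "x - 1"] exI[of _ "r - (x - 1)"]) auto
    next
      case MInf then show ?thesis using b by simp
    qed
  next
    case PInf note ai = this
    show ?thesis
    proof (cases b)
      case (real y)
      then show ?thesis using ai by (intro exI[of _ "r - (y - 1)"] exI[of _ "y - 1"]) auto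
    next
      case PInf
      then show ?thesis using ai by (intro exI[of _ "0"] exI[of _ "r"]) auto
    next
      case MInf then show ?thesis using b by simp
    qed
  next
    case MInf then show ?thesis using a by simp
  qed
  then obtain a' b' where ab: "a' + b' = r" "ereal a' < a" "ereal b' < b" by blast
  have "eventually (\<lambda>y. ereal a' < f y) F" using f ab unfolding lsc_at_def by blast
  moreover have "eventually (\<lambda>y. ereal b' < g y) F" using g ab unfolding lsc_at_def by blast
  ultimately show "eventually (\<lambda>y. ereal r < f y + g y) F"
  proof eventually_elim
    case (elim y)
    then have "ereal a' + ereal b' < f y + g y" by (rule ereal_add_strict_mono2)
    then show ?case using ab by simp
  qed
qed

lemma sum_not_minf:
  fixes v :: "'i \<Rightarrow> ereal"
  shows "(\<And>i. i \<in> A \<Longrightarrow> v i \<noteq> -\<infinity>) \<Longrightarrow> (\<Sum>i\<in>A. v i) \<noteq> -\<infinity>"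
proof (induct A rule: infinite_finite_induct)
  case (insert x A)
  then have "v x \<noteq> -\<infinity>" "(\<Sum>i\<in>A. v i) \<noteq> -\<infinity>" by auto
  then show ?case using insert by (cases "v x"; cases "\<Sum>i\<in>A. v i") auto
qed auto

lemma lsc_sum:
  fixes f :: "'i \<Rightarrow> 'z \<Rightarrow> ereal"
  assumes "finite A" "\<And>i. i \<in> A \<Longrightarrow> lsc_at F (f i) (v i)" "\<And>i. i \<in> A \<Longrightarrow> v i \<noteq> -\<infinity>"
  shows "lsc_at F (\<lambda>y. \<Sum>i\<in>A. f i y) (\<Sum>i\<in>A. v i)"
  using assms
proof (induct A rule: finite_induct)
  case empty
  then show ?case by (simp add: lsc_at_def)
next
  case (insert x A)
  have "lsc_at F (\<lambda>y. f x y + (\<Sum>i\<in>A. f i y)) (v x + (\<Sum>i\<in>A. v i))"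
    using insert by (intro lsc_add sum_not_minf) auto
  then show ?case using insert by simp
qed

definition cterm :: "real \<Rightarrow> real \<Rightarrow> ereal" where
  "cterm p q = (if p = 0 then 0 else if q = 0 then \<infinity> else ereal (p * (ln p - ln q)))"

lemma cterm_not_minf: "cterm p q \<noteq> -\<infinity>"
  by (simp add: cterm_def)

lemma classical_eq: "classical_rel_ent n p q = (\<Sum>x<n. cterm (p x) (q x))"
proof (cases "\<forall>x<n. q x = 0 \<longrightarrow> p x = 0")
  case True
  have "(\<Sum>x<n. cterm (p x) (q x)) = (\<Sum>x<n. ereal (if p x = 0 then 0 else p x * (ln (p x) - ln (q x))))"
    using True by (intro sum.cong refl) (auto simp: cterm_def)
  also have "\<dots> = ereal (\<Sum>x<n. if p x = 0 then 0 else p x * (ln (p x) - ln (q x)))" by simp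
  also have "(\<Sum>x<n. if p x = 0 then 0 else p x * (ln (p x) - ln (q x)))
      = (\<Sum>x\<in>{x. x < n \<and> p x \<noteq> 0}. p x * (ln (p x) - ln (q x)))"
  proof -
    have e: "{x. x < n \<and> p x \<noteq> 0} = {x\<in>{..<n}. p x \<noteq> 0}" by auto
    have "(\<Sum>x\<in>{x\<in>{..<n}. p x \<noteq> 0}. p x * (ln (p x) - ln (q x)))
        = (\<Sum>x<n. if p x \<noteq> 0 then p x * (ln (p x) - ln (q x)) else 0)"
      by (rule sum.inter_filter) simp
    also have "\<dots> = (\<Sum>x<n. if p x = 0 then 0 else p x * (ln (p x) - ln (q x)))"
      by (intro sum.cong refl) auto
    finally show ?thesis by (simp only: e)
  qed
  finally show ?thesis using True by (simp add: classical_rel_ent_def)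
next
  case False
  then obtain x where x: "x < n" "q x = 0" "p x \<noteq> 0" by auto
  then have "cterm (p x) (q x) = \<infinity>" by (simp add: cterm_def)
  then have "(\<Sum>x<n. cterm (p x) (q x)) = \<infinity>" using x(1) by (subst sum_Pinfty) (auto intro!: bexI[of _ x])
  then show ?thesis using False by (simp add: classical_rel_ent_def)
qed

lemma xlogx_cont_Ici: "continuous_on {0..} xlogx"
proof -
  have eq: "xlogx x = x * ln x" if "x \<ge> 0" for x using that by (auto simp: xlogx_def)
  have "continuous_on {0..} (\<lambda>x::real. x * ln x)"
  proof (clarsimp simp: continuous_on_eq_continuous_within)
    fix x :: real assume x: "0 \<le> x"
    show "continuous (at x within {0..}) (\<lambda>x. x * ln x)"
    proof (cases "x = 0")
      case True
      have "((\<lambda>x::real. x * ln x) \<longlongrightarrow> 0) (at_right 0)" by real_asymp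
      then show ?thesis using True
        by (simp add: continuous_within at_within_Ici_at_right)
    next
      case False
      then have "x > 0" using x by auto
      then have "isCont (\<lambda>x. x * ln x) x" by (intro continuous_intros) auto
      then show ?thesis using continuous_at_imp_continuous_at_within by blast
    qed
  qed
  then show ?thesis by (rule continuous_on_cong[THEN iffD1, rotated 2]) (auto simp: eq)
qed

lemma cterm_lower:
  assumes "p \<ge> 0" "q \<ge> 0"
  shows "ereal (xlogx p - p * q) \<le> cterm p q"
proof -
  consider "p = 0" | "p > 0" "q = 0" | "p > 0" "q > 0" using assms by linarith
  then show ?thesis
  proof cases
    case 1 then show ?thesis by (simp add: cterm_def xlogx_def)
  next
    case 2 then show ?thesis by (simp add: cterm_def)
  next
    case 3
    have "ln q \<le> q - 1" using 3 by (simp add: ln_le_minus_one)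
    then have "p * ln q \<le> p * q" using 3 by (smt (verit) mult_left_mono)
    then show ?thesis using 3 by (simp add: cterm_def xlogx_def right_diff_distrib)
  qed
qed

lemma cterm_lsc:
  fixes p q :: "'z \<Rightarrow> real"
  assumes P: "(p \<longlongrightarrow> p0) F" and Q: "(q \<longlongrightarrow> q0) F"
    and nn: "eventually (\<lambda>y. p y \<ge> 0 \<and> q y \<ge> 0) F" and p0: "p0 \<ge> 0" and q0: "q0 \<ge> 0"
  shows "lsc_at F (\<lambda>y. cterm (p y) (q y)) (cterm p0 q0)"
  unfolding lsc_at_def
proof (intro allI impI)
  fix r :: real assume r: "ereal r < cterm p0 q0"
  consider "p0 = 0" | "p0 > 0" "q0 > 0" | "p0 > 0" "q0 = 0" using p0 q0 by linarith
  then show "eventually (\<lambda>y. ereal r < cterm (p y) (q y)) F"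
  proof cases
    case 1
    then have r0: "r < 0" using r by (simp add: cterm_def)
    have "((\<lambda>y. xlogx (p y)) \<longlongrightarrow> xlogx p0) F"
      by (rule continuous_on_tendsto_compose[OF xlogx_cont_Ici P]) (use p0 nn in \<open>auto elim: eventually_mono\<close>)
    then have "((\<lambda>y. xlogx (p y) - p y * q y) \<longlongrightarrow> xlogx p0 - p0 * q0) F"
      by (intro tendsto_intros P Q)
    moreover have "xlogx p0 - p0 * q0 = 0" using 1 by (simp add: xlogx_def)
    ultimately have "eventually (\<lambda>y. r < xlogx (p y) - p y * q y) F"
      using r0 by (metis order_tendstoD(1))
    with nn show ?thesis
    proof eventually_elim
      case (elim y)
      then have "ereal r < ereal (xlogx (p y) - p y * q y)" by simp
      also have "\<dots> \<le> cterm (p y) (q y)" using elim by (intro cterm_lower) auto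
      finally show ?case .
    qed
  next
    case 2
    have pos: "eventually (\<lambda>y. p y > 0) F" "eventually (\<lambda>y. q y > 0) F"
      using order_tendstoD(1)[OF P, of 0] order_tendstoD(1)[OF Q, of 0] 2 by auto
    have "((\<lambda>y. p y * (ln (p y) - ln (q y))) \<longlongrightarrow> p0 * (ln p0 - ln q0)) F"
      using 2 by (intro tendsto_intros P Q) auto
    moreover have "r < p0 * (ln p0 - ln q0)" using r 2 by (simp add: cterm_def)
    ultimately have "eventually (\<lambda>y. r < p y * (ln (p y) - ln (q y))) F"
      by (metis order_tendstoD(1))
    with pos show ?thesis
      by eventually_elim (simp add: cterm_def)
  next
    case 3
    define K where "K = max 0 (2 * (r + 1) / p0)"
    have K0: "K \<ge> 0" by (simp add: K_def)
    have ev1: "eventually (\<lambda>y. p y > p0 / 2) F" using order_tendstoD(1)[OF P, of "p0/2"] 3 by auto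
    have ev2: "eventually (\<lambda>y. q y < exp (-K)) F" using order_tendstoD(2)[OF Q, of "exp (-K)"] 3 by auto
    from ev1 ev2 nn show ?thesis
    proof eventually_elim
      case (elim y)
      define a where "a = p y" define b where "b = q y"
      have a: "a > p0 / 2" "a > 0" using elim 3 by (auto simp: a_def)
      have b: "b < exp (-K)" "b \<ge> 0" using elim by (auto simp: b_def)
      show ?case
      proof (cases "b = 0")
        case True then show ?thesis using a by (simp add: cterm_def a_def b_def)
      next
        case False
        then have bp: "b > 0" using b by simp
        have lnb: "ln b < -K" using b bp by (metis ln_exp ln_less_cancel_iff exp_gt_zero)
        have "ln (inverse a) \<le> inverse a - 1" using a by (intro ln_le_minus_one) auto
        then have "- ln a \<le> inverse a - 1" by (simp add: ln_inverse)
        then have "a * (- ln a) \<le> a * (inverse a - 1)" using a by (intro mult_left_mono) auto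
        then have alna: "a * ln a \<ge> -1" using a by (simp add: right_diff_distrib)
        have "a * (- ln b) - (p0/2) * K = a * (- ln b - K) + (a - p0/2) * K" by (simp add: algebra_simps)
        moreover have "a * (- ln b - K) > 0" using a lnb by (intro mult_pos_pos) auto
        moreover have "(a - p0/2) * K \<ge> 0" using a K0 by simp
        ultimately have "a * (- ln b) > (p0/2) * K" by linarith
        moreover have "(p0/2) * K \<ge> (p0/2) * (2 * (r + 1) / p0)"
          using 3 by (intro mult_left_mono) (auto simp: K_def)
        moreover have "(p0/2) * (2 * (r + 1) / p0) = r + 1" using 3 by (simp add: field_simps)
        ultimately have "a * (ln a - ln b) > r" using alna by (simp add: right_diff_distrib)
        then show ?thesis using a bp by (simp add: cterm_def a_def b_def)
      qed
    qed
  qed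
qed

lemma classical_lsc:
  fixes P Q :: "'z \<Rightarrow> nat \<Rightarrow> real"
  assumes Pt: "\<And>x. x < n \<Longrightarrow> ((\<lambda>y. P y x) \<longlongrightarrow> P0 x) F"
    and Qt: "\<And>x. x < n \<Longrightarrow> ((\<lambda>y. Q y x) \<longlongrightarrow> Q0 x) F"
    and nn: "eventually (\<lambda>y. \<forall>x<n. P y x \<ge> 0 \<and> Q y x \<ge> 0) F"
    and nn0: "\<And>x. x < n \<Longrightarrow> P0 x \<ge> 0 \<and> Q0 x \<ge> 0"
  shows "lsc_at F (\<lambda>y. classical_rel_ent n (P y) (Q y)) (classical_rel_ent n P0 Q0)"
proof -
  have "lsc_at F (\<lambda>y. \<Sum>x<n. cterm (P y x) (Q y x)) (\<Sum>x<n. cterm (P0 x) (Q0 x))"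
  proof (rule lsc_sum)
    fix x assume x: "x \<in> {..<n}"
    show "lsc_at F (\<lambda>y. cterm (P y x) (Q y x)) (cterm (P0 x) (Q0 x))"
      using x nn0[of x] by (intro cterm_lsc Pt Qt) (auto intro: eventually_mono[OF nn])
    show "cterm (P0 x) (Q0 x) \<noteq> -\<infinity>" by (rule cterm_not_minf)
  qed simp
  then show ?thesis by (simp add: classical_eq)
qed

lemma matrix_sub_ldistrib': "(A::complex^'n^'m) ** (B - C) = A ** B - A ** C"
  by (simp add: matrix_matrix_mult_def vec_eq_iff sum_subtractf right_diff_distrib)

lemma rel_ent_eq:
  assumes "supp \<rho> \<subseteq> supp \<sigma>"
  shows "rel_ent \<rho> \<sigma> = ereal (ent \<rho> - Re (trace (\<rho> ** mat_log \<sigma>)))"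
  using assms by (simp add: rel_ent_def ent_def matrix_sub_ldistrib' trace_sub)

lemma psd_one: "psd (mat 1)"
  by (simp add: psd_def cinner_self)

lemma classical_not_minf: "classical_rel_ent n p q \<noteq> -\<infinity>"
  unfolding classical_eq by (intro sum_not_minf cterm_not_minf)

lemma cont_Re_trace[continuous_intros]:
  fixes f :: "'z::topological_space \<Rightarrow> complex^'n^'n"
  shows "continuous_on S f \<Longrightarrow> continuous_on S (\<lambda>x. Re (trace (f x)))"
  unfolding trace_def by (intro continuous_intros)

theorem lemma6:
  fixes T :: "complex^'b^'b \<Rightarrow> complex^'a^'a"
    and \<sigma> :: "complex^'a^'a"
    and N :: "complex^'a^'a \<Rightarrow> complex^'b^'b"
  assumes "tpcp T" and "psd \<sigma>" and "tpcp N"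
  shows "usc_on (S_sub \<sigma>)
           (\<lambda>\<rho>. rel_ent \<rho> \<sigma> - rel_ent (N \<rho>) (N \<sigma>) - meas_rel_ent \<rho> ((T \<circ> N) \<rho>))"
proof -
  note T = assms(1) and \<sigma> = assms(2) and N = assms(3)
  define S where "S = S_sub \<sigma>"
  define DM where "DM \<rho> = meas_rel_ent \<rho> ((T \<circ> N) \<rho>)" for \<rho>
  define G where "G \<rho> = ent \<rho> - Re (trace (\<rho> ** mat_log \<sigma>)) - (ent (N \<rho>) - Re (trace (N \<rho> ** mat_log (N \<sigma>))))" for \<rho>
  define P where "P \<rho> M x = Re (trace (\<rho> ** M x))" for \<rho> :: "complex^'a^'a" and M :: "nat \<Rightarrow> complex^'a^'a" and x
  define Q where "Q \<rho> M x = Re (trace ((T \<circ> N) \<rho> ** M x))" for \<rho> :: "complex^'a^'a" and M :: "nat \<Rightarrow> complex^'a^'a" and x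
  define PV where "PV = {(n, M). povm n (M :: nat \<Rightarrow> complex^'a^'a)}"
  have DM_def': "DM \<rho> = (SUP (n, M)\<in>PV. classical_rel_ent n (P \<rho> M) (Q \<rho> M))" for \<rho>
    unfolding DM_def meas_rel_ent_def PV_def P_def Q_def by simp
  have Sd: "density \<rho>" "supp \<rho> \<subseteq> supp \<sigma>" if "\<rho> \<in> S" for \<rho> using that by (auto simp: S_def S_sub_def)
  have psdS: "psd \<rho>" if "\<rho> \<in> S" for \<rho> using Sd[OF that] by (simp add: density_def)
  have fS: "rel_ent \<rho> \<sigma> - rel_ent (N \<rho>) (N \<sigma>) - meas_rel_ent \<rho> ((T \<circ> N) \<rho>) = ereal (G \<rho>) - DM \<rho>"
    if "\<rho> \<in> S" for \<rho>
  proof -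
    have "supp (N \<rho>) \<subseteq> supp (N \<sigma>)" using channel_supp[OF N psdS[OF that] \<sigma> Sd(2)[OF that]] .
    then show ?thesis using Sd(2)[OF that] by (simp add: rel_ent_eq G_def DM_def)
  qed
  have dens_sub: "S \<subseteq> {M. density M}" using Sd by auto
  have Nsub: "N ` S \<subseteq> {M. density M}" using Sd channel_density[OF N] by auto
  have Gc: "continuous_on S G"
    unfolding G_def
    by (intro continuous_intros continuous_on_subset[OF ent_cont dens_sub]
        continuous_on_compose2[OF ent_cont channel_cont[OF N] Nsub] channel_cont[OF N])
  have povm1: "(1, \<lambda>_. mat 1) \<in> PV" by (simp add: PV_def povm_def psd_one)
  have DMne: "DM \<rho> \<noteq> -\<infinity>" for \<rho>
  proof -
    have "classical_rel_ent 1 (P \<rho> (\<lambda>_. mat 1)) (Q \<rho> (\<lambda>_. mat 1)) \<le> DM \<rho>"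
      unfolding DM_def' using SUP_upper[OF povm1, of "\<lambda>(n, M). classical_rel_ent n (P \<rho> M) (Q \<rho> M)"] by simp
    then show ?thesis using classical_not_minf by (metis MInfty_eq_minfinity ereal_infty_less_eq(2))
  qed
  have DMge: "classical_rel_ent n (P \<rho> M) (Q \<rho> M) \<le> DM \<rho>" if "(n, M) \<in> PV" for n M \<rho>
    unfolding DM_def' using SUP_upper[OF that, of "\<lambda>(n, M). classical_rel_ent n (P \<rho> M) (Q \<rho> M)"] by simp
  have lsc: "lsc_at (at \<rho>0 within S) (\<lambda>\<rho>. classical_rel_ent n (P \<rho> M) (Q \<rho> M)) (classical_rel_ent n (P \<rho>0 M) (Q \<rho>0 M))"
    if \<rho>0: "\<rho>0 \<in> S" and nM: "(n, M) \<in> PV" for \<rho>0 n M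
  proof -
    have Mpsd: "psd (M x)" if "x < n" for x using nM that by (simp add: PV_def povm_def)
    have TNpsd: "psd (T (N \<rho>))" if "\<rho> \<in> S" for \<rho>
      using channel_psd[OF T channel_psd[OF N psdS[OF that]]] by simp
    have contP: "continuous_on S (\<lambda>\<rho>. P \<rho> M x)" for x
      unfolding P_def by (intro continuous_intros)
    have contQ: "continuous_on S (\<lambda>\<rho>. Q \<rho> M x)" for x
      unfolding Q_def o_def by (intro continuous_intros continuous_on_compose2[OF channel_cont[OF T] channel_cont[OF N]]) auto
    show ?thesis
    proof (rule classical_lsc)
      show "((\<lambda>y. P y M x) \<longlongrightarrow> P \<rho>0 M x) (at \<rho>0 within S)" if "x < n" for x
        using contP \<rho>0 unfolding continuous_on_def by blast
      show "((\<lambda>y. Q y M x) \<longlongrightarrow> Q \<rho>0 M x) (at \<rho>0 within S)" if "x < n" for x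
        using contQ \<rho>0 unfolding continuous_on_def by blast
      have "eventually (\<lambda>y. y \<in> S) (at \<rho>0 within S)" by (simp add: eventually_at_filter)
      then show "eventually (\<lambda>y. \<forall>x<n. 0 \<le> P y M x \<and> 0 \<le> Q y M x) (at \<rho>0 within S)"
        by eventually_elim (auto simp: P_def Q_def intro!: psd_trace_nonneg psdS TNpsd Mpsd)
      show "0 \<le> P \<rho>0 M x \<and> 0 \<le> Q \<rho>0 M x" if "x < n" for x
        using that \<rho>0 by (auto simp: P_def Q_def intro!: psd_trace_nonneg psdS TNpsd Mpsd)
    qed
  qed
  have main: "eventually (\<lambda>y. ereal (G y) - DM y < c) (at \<rho>0 within S)"
    if \<rho>0: "\<rho>0 \<in> S" and less: "ereal (G \<rho>0) - DM \<rho>0 < c" for \<rho>0 c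
  proof (cases c)
    case PInf
    have "ereal (G y) - DM y < c" for y using DMne[of y] PInf by (cases "DM y") auto
    then show ?thesis by simp
  next
    case MInf
    then show ?thesis using less by simp
  next
    case (real c')
    have "ereal (G \<rho>0 - c') < DM \<rho>0"
      using less real DMne[of \<rho>0] by (cases "DM \<rho>0") auto
    then obtain nM where nM: "nM \<in> PV"
      and lt: "ereal (G \<rho>0 - c') < classical_rel_ent (fst nM) (P \<rho>0 (snd nM)) (Q \<rho>0 (snd nM))"
      unfolding DM_def' less_SUP_iff by (auto split: prod.splits)
    obtain n M where nMe: "nM = (n, M)" by (cases nM)
    obtain r1 where r1: "ereal (G \<rho>0 - c') < ereal r1" "ereal r1 < classical_rel_ent n (P \<rho>0 M) (Q \<rho>0 M)"
      using ereal_dense2[OF lt] nMe by auto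
    have ev1: "eventually (\<lambda>y. ereal r1 < classical_rel_ent n (P y M) (Q y M)) (at \<rho>0 within S)"
      using lsc[OF \<rho>0 nM[unfolded nMe]] r1(2) unfolding lsc_at_def by blast
    have "(G \<longlongrightarrow> G \<rho>0) (at \<rho>0 within S)" using Gc \<rho>0 unfolding continuous_on_def by blast
    moreover have "G \<rho>0 < r1 + c'" using r1(1) by simp
    ultimately have ev2: "eventually (\<lambda>y. G y < r1 + c') (at \<rho>0 within S)"
      by (rule order_tendstoD(2))
    from ev1 ev2 show ?thesis
    proof eventually_elim
      case (elim y)
      have "ereal r1 < DM y" using less_le_trans[OF elim(1) DMge[OF nM[unfolded nMe], of y]] .
      then show ?case using elim real DMne[of y] by (cases "DM y") auto
    qed
  qed
  show ?thesis
    unfolding usc_on_def S_def[symmetric]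
  proof (intro ballI allI impI)
    fix \<rho>0 c
    assume \<rho>0: "\<rho>0 \<in> S"
      and "rel_ent \<rho>0 \<sigma> - rel_ent (N \<rho>0) (N \<sigma>) - meas_rel_ent \<rho>0 ((T \<circ> N) \<rho>0) < c"
    then have less: "ereal (G \<rho>0) - DM \<rho>0 < c" using fS by simp
    have "eventually (\<lambda>y. y \<in> S) (at \<rho>0 within S)" by (simp add: eventually_at_filter)
    with main[OF \<rho>0 less]
    show "eventually (\<lambda>y. rel_ent y \<sigma> - rel_ent (N y) (N \<sigma>) - meas_rel_ent y ((T \<circ> N) y) < c) (at \<rho>0 within S)"
    proof eventually_elim
      case (elim y)
      then show ?case using fS[of y] by simp
    qed
  qed
qed

end
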